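(* Under the role-persistence and uniform-bound assumptions below, with $\mathbf M_t=\mathbf A_t\mathbf W_t$, $$\sup_{t\in\mathbb N}\|\mathbf A_{t+1}\mathbf W_{t+1}\mathbf A_t\mathbf W_t\|\le\bar\alpha<1.$$
   Context: Fix a finite node set $\mathcal V$ with $n=|\mathcal V|$ and a sequence of directed graphs $G_t=(\mathcal V,\mathcal E_t)$, $t\in\mathbb N$. In $G_t$, a node $i$ is a pure obligee if it has no outgoing edge in $\mathcal E_t$, and a principal otherwise. For each $t$, $\mathbf W_t=(w^t_{ij})$ is an entrywise nonnegative $n\times n$ matrix with $w^t_{ij}>0$ only if $(j,i)\in\mathcal E_t$ and with every row sum at most $1$; $\mathbf A_t=\mathrm{diag}(\alpha_i^t)$ with $\alpha_i^t\in[0,1]$, and $\alpha_i^t=1$ whenever $i$ is a pure obligee in $G_t$. Role persistence: for every $i$ and $t$, $i$ is a pure obligee in $G_t$ if and only if it is a pure obligee in $G_{t+1}$ (pure obligees stay pure obligees and principals stay principals). Uniform bound: there is $\bar\alpha\in(0,1)$ such that $\alpha_i^t\le\bar\alpha$ for every $t$ and every node $i$ that is not a pure obligee in $G_t$. $\|\mathbf M\|$ is the induced $\ell_\infty$ matrix norm (maximum absolute row sum). *)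

theory Defs
  imports "HOL-Analysis.Analysis"
begin

text \<open>Nodes are the elements of a finite type 'n; matrices are real^'n^'n,
  with entry (i,j) written M $ i $ j. An edge (j,i) is an edge from j to i.\<close>

definition pure_obligee :: "('n \<times> 'n) set \<Rightarrow> 'n \<Rightarrow> bool" where
  "pure_obligee E i \<longleftrightarrow> (\<forall>j. (i, j) \<notin> E)"

definition diag_mat :: "('n::finite \<Rightarrow> real) \<Rightarrow> real^'n^'n" where
  "diag_mat a = (\<chi> i j. if i = j then a i else 0)"

definition linf_norm :: "real^'n::finite^'n \<Rightarrow> real" where
  "linf_norm M = Max (range (\<lambda>i. \<Sum>j\<in>UNIV. \<bar>M $ i $ j\<bar>))"

end

theory Submission
  imports Defs
begin

lemma entry_diag_mult:
  fixes a :: "'n::finite \<Rightarrow> real" and W :: "real^'n^'n"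
  shows "(diag_mat a ** W) $ i $ j = a i * W $ i $ j"
proof -
  have "(diag_mat a ** W) $ i $ j = (\<Sum>k\<in>UNIV. (if i = k then a i else 0) * W $ k $ j)"
    by (simp add: matrix_matrix_mult_def diag_mat_def)
  also have "\<dots> = (\<Sum>k\<in>UNIV. if k = i then a i * W $ i $ j else 0)"
    by (rule sum.cong) auto
  finally show ?thesis by simp
qed

lemma entry_mult_diag:
  fixes a :: "'n::finite \<Rightarrow> real" and W :: "real^'n^'n"
  shows "(W ** diag_mat a) $ i $ j = W $ i $ j * a j"
proof -
  have "(W ** diag_mat a) $ i $ j = (\<Sum>k\<in>UNIV. W $ i $ k * (if k = j then a k else 0))"
    by (simp add: matrix_matrix_mult_def diag_mat_def)
  also have "\<dots> = (\<Sum>k\<in>UNIV. if k = j then W $ i $ j * a j else 0)"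
    by (rule sum.cong) auto
  finally show ?thesis by simp
qed

theorem mainTheorem13:
  fixes E :: "nat \<Rightarrow> ('n::finite \<times> 'n) set"
    and W :: "nat \<Rightarrow> real^'n^'n"
    and \<alpha> :: "nat \<Rightarrow> 'n \<Rightarrow> real"
    and \<alpha>bar :: real
  assumes W_nonneg: "\<And>t i j. W t $ i $ j \<ge> 0"
    and W_support: "\<And>t i j. W t $ i $ j > 0 \<Longrightarrow> (j, i) \<in> E t"
    and W_rows: "\<And>t i. (\<Sum>j\<in>UNIV. W t $ i $ j) \<le> 1"
    and \<alpha>_range: "\<And>t i. 0 \<le> \<alpha> t i \<and> \<alpha> t i \<le> 1"
    and \<alpha>_obligee: "\<And>t i. pure_obligee (E t) i \<Longrightarrow> \<alpha> t i = 1"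
    and role_persistence: "\<And>t i. pure_obligee (E t) i \<longleftrightarrow> pure_obligee (E (Suc t)) i"
    and \<alpha>bar_range: "0 < \<alpha>bar" "\<alpha>bar < 1"
    and uniform_bound: "\<And>t i. \<not> pure_obligee (E t) i \<Longrightarrow> \<alpha> t i \<le> \<alpha>bar"
  shows "\<forall>t. linf_norm (diag_mat (\<alpha> (Suc t)) ** W (Suc t) ** diag_mat (\<alpha> t) ** W t) \<le> \<alpha>bar"
proof
  fix t
  let ?P = "diag_mat (\<alpha> (Suc t)) ** W (Suc t) ** diag_mat (\<alpha> t) ** W t"
  let ?c = "\<lambda>i k. \<alpha> (Suc t) i * W (Suc t) $ i $ k * \<alpha> t k"
  have c_nn: "\<And>i k. ?c i k \<ge> 0" using \<alpha>_range W_nonneg by simp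
  have c_le: "\<And>i k. ?c i k \<le> W (Suc t) $ i $ k * \<alpha>bar"
  proof -
    fix i k
    show "?c i k \<le> W (Suc t) $ i $ k * \<alpha>bar"
    proof (cases "W (Suc t) $ i $ k > 0")
      case True
      then have "(k, i) \<in> E (Suc t)" by (rule W_support)
      then have "\<not> pure_obligee (E (Suc t)) k" by (auto simp: pure_obligee_def)
      then have "\<not> pure_obligee (E t) k" using role_persistence by blast
      then have a: "\<alpha> t k \<le> \<alpha>bar" by (rule uniform_bound)
      have "?c i k \<le> 1 * W (Suc t) $ i $ k * \<alpha> t k"
        by (intro mult_right_mono) (use \<alpha>_range W_nonneg in auto)
      also have "\<dots> \<le> W (Suc t) $ i $ k * \<alpha>bar"
        using a True by simp
      finally show ?thesis .
    next
      case False
      then have "W (Suc t) $ i $ k = 0" using W_nonneg[of "Suc t" i k] by linarith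
      then show ?thesis by simp
    qed
  qed
  have entry: "\<And>i j. ?P $ i $ j = (\<Sum>k\<in>UNIV. ?c i k * W t $ k $ j)"
    by (simp add: matrix_matrix_mult_def[of _ "W t"] entry_diag_mult entry_mult_diag)
  have row: "(\<Sum>j\<in>UNIV. \<bar>?P $ i $ j\<bar>) \<le> \<alpha>bar" for i
  proof -
    have "(\<Sum>j\<in>UNIV. \<bar>?P $ i $ j\<bar>) = (\<Sum>j\<in>UNIV. \<Sum>k\<in>UNIV. ?c i k * W t $ k $ j)"
      unfolding entry
      by (rule sum.cong[OF refl], rule abs_of_nonneg, rule sum_nonneg)
         (use c_nn W_nonneg in auto)
    also have "\<dots> = (\<Sum>k\<in>UNIV. ?c i k * (\<Sum>j\<in>UNIV. W t $ k $ j))"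
      by (subst sum.swap) (simp add: sum_distrib_left)
    also have "\<dots> \<le> (\<Sum>k\<in>UNIV. ?c i k)"
      by (rule sum_mono) (use c_nn W_rows in \<open>auto intro: mult_left_le\<close>)
    also have "\<dots> \<le> (\<Sum>k\<in>UNIV. W (Suc t) $ i $ k * \<alpha>bar)"
      by (rule sum_mono) (rule c_le)
    also have "\<dots> = (\<Sum>k\<in>UNIV. W (Suc t) $ i $ k) * \<alpha>bar"
      by (simp add: sum_distrib_right)
    also have "\<dots> \<le> 1 * \<alpha>bar"
      by (rule mult_right_mono) (use W_rows \<alpha>bar_range in auto)
    finally show ?thesis by simp
  qed
  show "linf_norm ?P \<le> \<alpha>bar"
    unfolding linf_norm_def using row by (subst Max_le_iff) auto
qed

end
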